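(* Let $\Gamma$ be a numerical semigroup minimally generated by $r_0,\ldots,r_h$ with $h\ge 1$, and suppose $\Gamma$ is free with respect to the arrangement $(r_0,\ldots,r_h)$. For $k\in\{1,\ldots,h+1\}$ let $d_k=\gcd(r_0,\ldots,r_{k-1})$, and for $k\in\{1,\ldots,h\}$ let $e_k=d_k/d_{k+1}$. Then: (1) $\gcd(d_h,r_h)=1$; (2) $d_h$ divides $\mathrm F(\Gamma)+r_h$ (and consequently $d_h$ does not divide $\mathrm F(\Gamma)$); (3) $e_kr_k\in\langle r_0,\ldots,r_{k-1}\rangle$ for all $k=1,\ldots,h$; in particular $e_k\ge 2$; (4) $d_1>d_2>\cdots>d_{h+1}=1$; (5) $d_h\le \frac{\mathrm c(\Gamma)}{r_h-1}+1$; (6) $(d_h-1)(r_h-1)\ge 2^h$.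
   Context: A numerical semigroup is a submonoid of $(\mathbb N,+)$ with finite complement in $\mathbb N$; it has a unique minimal generating system. $\mathrm F(\Gamma)$ is the largest integer not in $\Gamma$ ($\mathrm F(\mathbb N)=-1$) and $\mathrm c(\Gamma)=\mathrm F(\Gamma)+1$. $\langle X\rangle$ denotes the submonoid generated by $X$. Gluing: if $A$ is a set of positive integers and $A=A_1\cup A_2$ a nontrivial partition, $A$ is the gluing of $A_1$ and $A_2$ if $\mathrm{lcm}(d_1',d_2')\in\langle A_1\rangle\cap\langle A_2\rangle$ where $d_i'=\gcd(A_i)$; if $A$ is the minimal generating set of $\Gamma$, one says $\Gamma$ is the gluing of the numerical semigroups $\langle A_1/d_1'\rangle$ and $\langle A_2/d_2'\rangle$. Freeness for an arrangement $(r_0,\ldots,r_h)$ of the minimal generators is defined recursively: $\Gamma$ is free if $h=0$ (so $\Gamma=\mathbb N$, $r_0=1$), or if $h\ge1$, $\{r_0,\ldots,r_h\}$ is the gluing of $\{r_0,\ldots,r_{h-1}\}$ and $\{r_h\}$, and $\Gamma_{h-1}=\langle r_0/d_h,\ldots,r_{h-1}/d_h\rangle$ is free for the arrangement $(r_0/d_h,\ldots,r_{h-1}/d_h)$. *)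

theory Defs
  imports Complex_Main
begin

inductive_set gen :: "nat set \<Rightarrow> nat set" for X :: "nat set" where
  gen_zero: "0 \<in> gen X"
| gen_add: "x \<in> X \<Longrightarrow> y \<in> gen X \<Longrightarrow> x + y \<in> gen X"

definition numerical_semigroup :: "nat set \<Rightarrow> bool" where
  "numerical_semigroup S \<longleftrightarrow> 0 \<in> S \<and> (\<forall>x\<in>S. \<forall>y\<in>S. x + y \<in> S) \<and> finite (UNIV - S)"

definition minimal_generating_system :: "nat set \<Rightarrow> nat set \<Rightarrow> bool" where
  "minimal_generating_system A S \<longleftrightarrow> gen A = S \<and> (\<forall>B. B \<subset> A \<longrightarrow> gen B \<noteq> S)"

definition frobenius :: "nat set \<Rightarrow> int" where
  "frobenius S = (if S = UNIV then -1 else int (Max (UNIV - S)))"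

definition conductor :: "nat set \<Rightarrow> int" where
  "conductor S = frobenius S + 1"

definition gluing :: "nat set \<Rightarrow> nat set \<Rightarrow> nat set \<Rightarrow> bool" where
  "gluing A A1 A2 \<longleftrightarrow> (\<forall>a\<in>A. 0 < a) \<and> A = A1 \<union> A2 \<and> A1 \<inter> A2 = {} \<and>
     A1 \<noteq> {} \<and> A2 \<noteq> {} \<and>
     lcm (Gcd A1) (Gcd A2) \<in> gen A1 \<inter> gen A2"

function free_arr :: "nat list \<Rightarrow> bool" where
  "free_arr [] = False"
| "free_arr [x] = (x = 1)"
| "free_arr (x # y # zs) =
    (distinct (x # y # zs) \<and>
     numerical_semigroup (gen (set (x # y # zs))) \<and>
     minimal_generating_system (set (x # y # zs)) (gen (set (x # y # zs))) \<and>
     gluing (set (x # y # zs)) (set (butlast (x # y # zs))) {last (x # y # zs)} \<and>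
     free_arr (map (\<lambda>a. a div Gcd (set (butlast (x # y # zs)))) (butlast (x # y # zs))))"
  by pat_completeness auto
termination
  by (relation "measure length") auto

end

theory Submission
  imports Defs
begin


lemma gen_base: "x \<in> X \<Longrightarrow> x \<in> gen X"
  using gen_add[of x X 0] gen_zero by simp

lemma gen_add_closed: "a \<in> gen X \<Longrightarrow> b \<in> gen X \<Longrightarrow> a + b \<in> gen X"
  by (induction a rule: gen.induct) (auto simp: add.assoc intro: gen_add)

lemma gen_mult: "x \<in> gen X \<Longrightarrow> k * x \<in> gen X"
  by (induction k) (auto intro: gen_add_closed gen_zero)

lemma gen_subset_gen: "X \<subseteq> gen Y \<Longrightarrow> gen X \<subseteq> gen Y"
proof
  fix x assume "X \<subseteq> gen Y" "x \<in> gen X"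
  from \<open>x \<in> gen X\<close> \<open>X \<subseteq> gen Y\<close> show "x \<in> gen Y"
    by (induction x rule: gen.induct) (auto intro: gen_add_closed gen_zero)
qed

lemma gen_mono: "X \<subseteq> Y \<Longrightarrow> gen X \<subseteq> gen Y"
  by (rule gen_subset_gen) (auto intro: gen_base)

lemma gen_dvd: "x \<in> gen X \<Longrightarrow> Gcd X dvd x"
  by (induction x rule: gen.induct) auto

lemma gen_ge: "y \<in> gen X \<Longrightarrow> (\<forall>x\<in>X. m \<le> x) \<Longrightarrow> y \<noteq> 0 \<Longrightarrow> (m::nat) \<le> y"
  by (induction y rule: gen.induct) force+

lemma gen_image_mult: "gen ((*) c ` X) = (*) c ` gen X"
proof
  show "gen ((*) c ` X) \<subseteq> (*) c ` gen X"
  proof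
    fix x assume "x \<in> gen ((*) c ` X)"
    then show "x \<in> (*) c ` gen X"
    proof (induction x rule: gen.induct)
      case gen_zero then show ?case using gen.gen_zero by force
    next
      case (gen_add x y)
      then obtain u v where "u \<in> X" "x = c*u" "v \<in> gen X" "y = c*v" by auto
      then show ?case using gen.gen_add[of u X v] by (auto simp: distrib_left intro!: rev_image_eqI[of "u+v"])
    qed
  qed
next
  show "(*) c ` gen X \<subseteq> gen ((*) c ` X)"
  proof
    fix x assume "x \<in> (*) c ` gen X"
    then obtain y where y: "y \<in> gen X" "x = c*y" by auto
    from y(1) have "c*y \<in> gen ((*) c ` X)"
      by (induction y rule: gen.induct) (auto simp: distrib_left intro: gen.intros)
    with y show "x \<in> gen ((*) c ` X)" by simp
  qed
qed

lemma gen_insert_decomp: "x \<in> gen (insert a X) \<Longrightarrow> \<exists>y\<in>gen X. \<exists>l. x = y + l * a"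
proof (induction x rule: gen.induct)
  case gen_zero then show ?case using gen.gen_zero by force
next
  case (gen_add x y)
  then obtain z l where z: "z \<in> gen X" "y = z + l*a" by auto
  show ?case
  proof (cases "x = a")
    case True then show ?thesis using z by (intro bexI[of _ z] exI[of _ "Suc l"]) auto
  next
    case False then have "x \<in> X" using gen_add by auto
    then show ?thesis using z by (intro bexI[of _ "x+z"] exI[of _ l]) (auto intro: gen.gen_add)
  qed
qed

lemma mgs_not: "minimal_generating_system A S \<Longrightarrow> a \<in> A \<Longrightarrow> a \<notin> gen (A - {a})"
proof
  assume m: "minimal_generating_system A S" and a: "a \<in> A" and g: "a \<in> gen (A - {a})"
  have "A \<subseteq> gen (A - {a})" using g by (auto intro: gen_base)
  then have "gen A \<subseteq> gen (A - {a})" by (rule gen_subset_gen)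
  moreover have "gen (A - {a}) \<subseteq> gen A" by (rule gen_mono) auto
  ultimately have "gen (A - {a}) = S" using m unfolding minimal_generating_system_def by auto
  moreover have "A - {a} \<subset> A" using a by auto
  ultimately show False using m unfolding minimal_generating_system_def by auto
qed

lemma ns_Gcd: "numerical_semigroup (gen A) \<Longrightarrow> Gcd A = 1"
proof -
  assume "numerical_semigroup (gen A)"
  then have f: "finite (UNIV - gen A)" unfolding numerical_semigroup_def by auto
  then obtain N where N: "\<forall>x\<in>UNIV - gen A. x < N" using finite_nat_set_iff_bounded by blast
  then have "N \<in> gen A" "Suc N \<in> gen A" by (auto, metis DiffI Suc_lessD UNIV_I less_irrefl_nat)
  then have "Gcd A dvd N" "Gcd A dvd Suc N" by (auto intro: gen_dvd)
  then have "Gcd A dvd 1" by (metis dvd_diff_nat diff_Suc_eq_diff_pred diff_self_eq_0 diff_zero nat_dvd_1_iff_1 Suc_eq_plus1 add_diff_cancel_left')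
  then show ?thesis by simp
qed

lemma free_arr_long:
  assumes "length r \<ge> 2"
  shows "free_arr r = (distinct r \<and> numerical_semigroup (gen (set r)) \<and>
     minimal_generating_system (set r) (gen (set r)) \<and>
     gluing (set r) (set (butlast r)) {last r} \<and>
     free_arr (map (\<lambda>a. a div Gcd (set (butlast r))) (butlast r)))"
  using assms by (cases r rule: free_arr.cases) auto

lemma free_step:
  assumes fr: "free_arr r" and len: "length r \<ge> 2"
  defines "b \<equiv> butlast r" and "a \<equiv> last r"
  defines "d \<equiv> Gcd (set b)"
  defines "b' \<equiv> map (\<lambda>x. x div d) b"
  shows "free_arr b' \<and> length b' = length r - 1 \<and> b = map ((*) d) b' \<and> 2 \<le> d \<and>
    coprime d a \<and> a \<in> gen (set b') \<and> a \<notin> set b' \<and> 0 < a \<and> Gcd (set r) = 1 \<and>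
    r = b @ [a] \<and> minimal_generating_system (set r) (gen (set r)) \<and> distinct r \<and>
    (\<forall>x\<in>set r. 0 < x) \<and> numerical_semigroup (gen (set r))"
proof -
  have F: "distinct r" "numerical_semigroup (gen (set r))"
     "minimal_generating_system (set r) (gen (set r))"
     "gluing (set r) (set b) {a}" "free_arr b'"
    using fr free_arr_long[OF len] unfolding b_def a_def d_def b'_def by auto
  have rba: "r = b @ [a]" using len unfolding a_def b_def
    by (metis append_butlast_last_id list.size(3) not_numeral_le_zero)
  have pos: "\<forall>x\<in>set r. 0 < x" using F(4) unfolding gluing_def by auto
  have bne: "b \<noteq> []" using len rba by (cases b) auto
  have setr: "set r = insert a (set b)" using rba by auto
  have anb: "a \<notin> set b" using F(1) rba by auto
  have dpos: "0 < d" unfolding d_def using pos bne setr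
    by (metis Gcd_0_iff gr0I insertCI list.set_sel(1) singletonD subsetD)
  have ddvd: "\<forall>x\<in>set b. d dvd x" unfolding d_def by auto
  have bmap: "b = map ((*) d) b'" unfolding b'_def map_map using ddvd
    by (intro map_idI[symmetric]) (simp add: dvd_mult_div_cancel)
  have setb: "set b = (*) d ` set b'" using bmap by simp
  have genb: "gen (set b) = (*) d ` gen (set b')" using setb gen_image_mult by simp
  have G1: "Gcd (set r) = 1" using ns_Gcd F(2) by simp
  then have cop: "coprime d a" unfolding d_def setr
    by (simp add: coprime_iff_gcd_eq_1 gcd.commute)
  have "lcm d a \<in> gen (set b)" using F(4) unfolding gluing_def d_def by auto
  then have da: "d * a \<in> gen (set b)" using cop by (simp add: lcm_coprime)
  then have agen: "a \<in> gen (set b')" using genb dpos by auto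
  have ngen: "a \<notin> gen (set b)" using mgs_not[OF F(3), of a] setr anb
    by (metis Diff_insert_absorb insertI1)
  then have d1: "d \<noteq> 1" using da by auto
  have apos: "0 < a" using pos setr by auto
  have anb': "a \<notin> set b'"
  proof
    assume "a \<in> set b'"
    then have m: "d * a \<in> set r" using setb setr by auto
    have ne: "d * a \<noteq> a" using d1 apos by simp
    have "d * a \<in> gen {a}" using gen_mult[OF gen_base[of a "{a}"]] by simp
    moreover have "gen {a} \<subseteq> gen (set r - {d*a})" using ne setr by (intro gen_mono) auto
    ultimately show False using mgs_not[OF F(3) m] by auto
  qed
  show ?thesis using F bmap d1 dpos cop agen anb' apos G1 rba pos
    unfolding b'_def b_def by auto
qed

lemma Gcd_map_mult: "Gcd (set (map ((*) (d::nat)) l)) = d * Gcd (set l)"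
  using Gcd_mult[of d "set l"] by simp

lemma free_main:
  "free_arr r \<Longrightarrow> length r = Suc n \<Longrightarrow>
   (\<forall>k\<in>{1..n}. (Gcd (set (take k r)) div Gcd (set (take (Suc k) r))) * r ! k \<in> gen (set (take k r)))
   \<and> (\<forall>x\<in>set r. 2 ^ n \<le> x)"
proof (induction n arbitrary: r)
  case 0
  then obtain x where "r = [x]" by (metis length_0_conv length_Suc_conv)
  then show ?case using 0 by auto
next
  case (Suc m)
  define b where "b = butlast r"
  define a where "a = last r"
  define d where "d = Gcd (set b)"
  define b' where "b' = map (\<lambda>x. x div d) b"
  have S: "free_arr b' \<and> length b' = length r - 1 \<and> b = map ((*) d) b' \<and> 2 \<le> d \<and>
    coprime d a \<and> a \<in> gen (set b') \<and> a \<notin> set b' \<and> 0 < a \<and> Gcd (set r) = 1 \<and>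
    r = b @ [a] \<and> minimal_generating_system (set r) (gen (set r)) \<and> distinct r \<and>
    (\<forall>x\<in>set r. 0 < x) \<and> numerical_semigroup (gen (set r))"
    using free_step[of r] Suc.prems unfolding b_def a_def d_def b'_def by auto
  have lb': "length b' = Suc m" using S Suc.prems by simp
  have IH: "(\<forall>k\<in>{1..m}. (Gcd (set (take k b')) div Gcd (set (take (Suc k) b'))) * b' ! k \<in> gen (set (take k b')))
   \<and> (\<forall>x\<in>set b'. 2 ^ m \<le> x)" using Suc.IH[OF _ lb'] S by blast
  have bm: "b = map ((*) d) b'" and d2: "2 \<le> d" and rba: "r = b @ [a]" using S by auto
  have genb: "\<And>l. gen (set (map ((*) d) l)) = (*) d ` gen (set l)"
    using gen_image_mult by simp
  have ge_b': "\<forall>x\<in>set b'. 2 ^ m \<le> x" using IH by blast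
  have ge_b: "\<forall>x\<in>set b. 2 ^ Suc m \<le> x"
  proof
    fix x assume "x \<in> set b"
    then obtain y where "y \<in> set b'" "x = d * y" using bm by auto
    then show "2 ^ Suc m \<le> x" using ge_b' d2 by (simp add: mult_le_mono)
  qed
  have ge_a: "2 ^ Suc m \<le> a"
  proof -
    have ag: "a \<in> gen (set (b'))" and an: "a \<notin> set b'" and a0: "0 < a" using S by auto
    have "a \<noteq> 0" using a0 by simp
    from ag an a0 show ?thesis
    proof (cases rule: gen.cases)
      case gen_zero then show ?thesis using a0 by simp
    next
      case (gen_add u v)
      then have "v \<noteq> 0" using an by (metis add_0_right)
      then have "2 ^ m \<le> v" using gen_ge[OF gen_add(3) ge_b'] by simp
      moreover have "2 ^ m \<le> u" using gen_add(2) ge_b' by auto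
      ultimately show ?thesis using gen_add(1) by simp
    qed
  qed
  have P2: "\<forall>x\<in>set r. 2 ^ Suc m \<le> x" using ge_a ge_b rba by auto
  have P1: "\<forall>k\<in>{1..Suc m}. (Gcd (set (take k r)) div Gcd (set (take (Suc k) r))) * r ! k \<in> gen (set (take k r))"
  proof
    fix k assume k: "k \<in> {1..Suc m}"
    have lb: "length b = Suc m" using bm lb' by simp
    show "(Gcd (set (take k r)) div Gcd (set (take (Suc k) r))) * r ! k \<in> gen (set (take k r))"
    proof (cases "k = Suc m")
      case True
      have "take k r = b" "take (Suc k) r = r" "r ! k = a" using rba lb True apply auto by (metis nth_append_length)
      moreover have "d * a \<in> gen (set b)"
      proof -
        have "d * a \<in> (*) d ` gen (set b')" using S by auto
        then show ?thesis using genb bm by metis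
      qed
      moreover have "Gcd (set r) = 1" using S by blast
      ultimately show ?thesis unfolding d_def by simp
    next
      case False
      then have km: "k \<le> m" "1 \<le> k" using k by auto
      have t1: "take k r = map ((*) d) (take k b')" using rba lb km bm by (simp add: take_map)
      have t2: "take (Suc k) r = map ((*) d) (take (Suc k) b')" using rba lb km bm by (simp add: take_map)
      have nk: "r ! k = d * (b' ! k)" using rba lb km bm by (simp add: nth_append)
      have IHk: "(Gcd (set (take k b')) div Gcd (set (take (Suc k) b'))) * b' ! k \<in> gen (set (take k b'))"
        using IH km by auto
      have "(Gcd (set (take k r)) div Gcd (set (take (Suc k) r))) = 
            (Gcd (set (take k b')) div Gcd (set (take (Suc k) b')))"
        unfolding t1 t2 Gcd_map_mult using d2 by simp
      then have "(Gcd (set (take k r)) div Gcd (set (take (Suc k) r))) * r ! k =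
         d * ((Gcd (set (take k b')) div Gcd (set (take (Suc k) b'))) * b' ! k)"
        using nk by simp
      also have "\<dots> \<in> gen (set (take k r))" unfolding t1 genb using IHk by blast
      finally show ?thesis .
    qed
  qed
  show ?case using P1 P2 by blast
qed


lemma nth_notin_take: "distinct r \<Longrightarrow> k < length r \<Longrightarrow> r ! k \<notin> set (take k r)"
  using set_take_disj_set_drop_if_distinct[of r k k] Cons_nth_drop_Suc[of k r]
  by (metis disjoint_iff list.set_intros(1) order_refl)

theorem lemma3p3:
  fixes \<Gamma> :: "nat set" and r :: "nat list" and h :: nat
  assumes "numerical_semigroup \<Gamma>"
    and "length r = h + 1" and "distinct r"
    and "minimal_generating_system (set r) \<Gamma>"
    and "h \<ge> 1"
    and "free_arr r"
  defines "d \<equiv> (\<lambda>k. Gcd (set (take k r)))"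
  defines "e \<equiv> (\<lambda>k. d k div d (Suc k))"
  shows "(gcd (d h) (r ! h) = 1)
    \<and> (int (d h) dvd frobenius \<Gamma> + int (r ! h))
    \<and> (\<not> int (d h) dvd frobenius \<Gamma>)
    \<and> (\<forall>k\<in>{1..h}. e k * r ! k \<in> gen (set (take k r)))
    \<and> (\<forall>k\<in>{1..h}. e k \<ge> 2)
    \<and> (\<forall>k\<in>{1..h}. d (Suc k) < d k)
    \<and> (d (h + 1) = 1)
    \<and> (real (d h) \<le> real_of_int (conductor \<Gamma>) / (real (r ! h) - 1) + 1)
    \<and> ((d h - 1) * (r ! h - 1) \<ge> 2 ^ h)"
proof -
  note ns = assms(1) and len = assms(2) and dist = assms(3) and mgs = assms(4) and h1 = assms(5)
    and fr = assms(6)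
  have Gam: "\<Gamma> = gen (set r)" using mgs unfolding minimal_generating_system_def by auto
  have len2: "length r \<ge> 2" using len h1 by simp
  define b where "b = butlast r"
  define a where "a = last r"
  define dd where "dd = Gcd (set b)"
  define b' where "b' = map (\<lambda>x. x div dd) b"
  have S: "free_arr b' \<and> length b' = length r - 1 \<and> b = map ((*) dd) b' \<and> 2 \<le> dd \<and>
    coprime dd a \<and> a \<in> gen (set b') \<and> a \<notin> set b' \<and> 0 < a \<and> Gcd (set r) = 1 \<and>
    r = b @ [a] \<and> minimal_generating_system (set r) (gen (set r)) \<and> distinct r \<and>
    (\<forall>x\<in>set r. 0 < x) \<and> numerical_semigroup (gen (set r))"
    using free_step[OF fr len2] unfolding b_def a_def dd_def b'_def by blast
  have bm: "b = map ((*) dd) b'" and d2: "2 \<le> dd" and cop: "coprime dd a"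
    and ag: "a \<in> gen (set b')" and G1: "Gcd (set r) = 1" and rba: "r = b @ [a]"
    and pos: "\<forall>x\<in>set r. 0 < x" and apos: "0 < a" using S by blast+
  have lb: "length b = h" using len unfolding b_def by simp
  have tb: "take h r = b" using lb rba by simp
  have tr: "take (h+1) r = r" using len by simp
  have rh: "r ! h = a" using lb rba by (metis nth_append_length)
  have dh: "d h = dd" unfolding d_def dd_def using tb by simp
  have dh1: "d (h+1) = 1" unfolding d_def using tr G1 by simp
  have M: "(\<forall>k\<in>{1..h}. (Gcd (set (take k r)) div Gcd (set (take (Suc k) r))) * r ! k \<in> gen (set (take k r)))
   \<and> (\<forall>x\<in>set r. 2 ^ h \<le> x)" using free_main[OF fr] len by simp
  have ge: "\<forall>x\<in>set r. 2 ^ h \<le> x" using M by blast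
  have P4: "\<forall>k\<in>{1..h}. e k * r ! k \<in> gen (set (take k r))" using M unfolding e_def d_def by blast
  have two_h: "(2::nat) \<le> 2 ^ h" using h1 power_increasing[of 1 h "2::nat"] by simp
  have ge2: "\<forall>x\<in>set r. 2 \<le> x" using ge two_h by auto
  have a_ge: "2 ^ h \<le> a" using ge rba by auto
  have a2: "2 \<le> a" using a_ge two_h by simp
  have genb: "gen (set b) = (*) dd ` gen (set b')" using bm gen_image_mult by simp
  have setr: "set r = insert a (set b)" using rba by auto
  have NF: "\<exists>y\<in>gen (set b'). \<exists>\<mu><dd. x = dd*y + \<mu>*a" if "x \<in> \<Gamma>" for x
  proof -
    from that have "x \<in> gen (insert a (set b))" using Gam setr by simp
    then obtain z l where z: "z \<in> gen (set b)" "x = z + l*a" using gen_insert_decomp by blast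
    then obtain y0 where y0: "y0 \<in> gen (set b')" "z = dd*y0" using genb by auto
    define q where "q = l div dd"
    define \<mu> where "\<mu> = l mod dd"
    have l: "l = q*dd + \<mu>" unfolding q_def \<mu>_def by simp
    have "x = dd*(y0 + q*a) + \<mu>*a" using z y0 l by (simp add: algebra_simps)
    moreover have "y0 + q*a \<in> gen (set b')" using y0 ag by (intro gen_add_closed gen_mult)
    moreover have "\<mu> < dd" unfolding \<mu>_def using d2 by simp
    ultimately show ?thesis by blast
  qed
  have BK: "dd*y + \<mu>*a \<in> \<Gamma>" if "y \<in> gen (set b')" for y \<mu>
  proof -
    have "dd*y \<in> gen (set b)" using genb that by auto
    then have "dd*y \<in> \<Gamma>" using Gam setr gen_mono[of "set b" "set r"] by auto
    moreover have "\<mu>*a \<in> \<Gamma>" using Gam setr by (auto intro: gen_mult gen_base)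
    ultimately show ?thesis using Gam by (auto intro: gen_add_closed)
  qed
  have one: "1 \<notin> \<Gamma>"
  proof
    assume "1 \<in> \<Gamma>"
    then have "(2::nat) \<le> 1" using gen_ge[of 1 "set r" 2] ge2 Gam by auto
    then show False by simp
  qed
  have fin: "finite (UNIV - \<Gamma>)" using ns unfolding numerical_semigroup_def by auto
  have ne: "UNIV - \<Gamma> \<noteq> {}" using one by auto
  define x where "x = Max (UNIV - \<Gamma>)"
  have fro: "frobenius \<Gamma> = int x" unfolding frobenius_def x_def using one by auto
  have xn: "x \<notin> \<Gamma>" unfolding x_def using Max_in[OF fin ne] by auto
  have xmax: "z \<le> x" if "z \<notin> \<Gamma>" for z unfolding x_def using fin that by (auto intro: Max_ge)
  have dvd2: "dd dvd x + a"
  proof -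
    have "x + a \<in> \<Gamma>"
    proof (rule ccontr)
      assume "x + a \<notin> \<Gamma>"
      then have "x + a \<le> x" by (rule xmax)
      then show False using apos by simp
    qed
    then obtain y \<mu> where y: "y \<in> gen (set b')" "\<mu> < dd" "x + a = dd*y + \<mu>*a" using NF by blast
    show ?thesis
    proof (cases "\<mu> = 0")
      case True then show ?thesis using y by simp
    next
      case False
      have "\<mu>*a = (\<mu>-1)*a + a" using False by (cases \<mu>) auto
      then have "x = dd*y + (\<mu>-1)*a" using y(3) by linarith
      then have "x \<in> \<Gamma>" using BK y by simp
      then show ?thesis using xn by simp
    qed
  qed
  have P2: "int (d h) dvd frobenius \<Gamma> + int (r ! h)"
  proof -
    have "int dd dvd int (x+a)" using dvd2 by (simp only: int_dvd_int_iff)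
    then show ?thesis unfolding fro dh rh by simp
  qed
  have P3: "\<not> int (d h) dvd frobenius \<Gamma>"
  proof
    assume "int (d h) dvd frobenius \<Gamma>"
    then have "dd dvd x" unfolding dh fro by simp
    then have "dd dvd a" using dvd2 by (simp add: dvd_add_right_iff)
    then have "is_unit dd" using coprime_common_divisor[OF cop dvd_refl] by blast
    then have "dd dvd 1" by simp
    then show False using d2 by simp
  qed
  have P1: "gcd (d h) (r ! h) = 1" using cop unfolding dh rh by simp
  define z where "z = (dd-1)*a - dd"
  have zle: "dd \<le> (dd-1)*a"
  proof -
    have "(dd-1)*2 \<le> (dd-1)*a" using a2 by simp
    moreover have "dd \<le> (dd-1)*2" using d2 by linarith
    ultimately show ?thesis by linarith
  qed
  have zn: "z \<notin> \<Gamma>"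
  proof
    assume "z \<in> \<Gamma>"
    then obtain y \<mu> where y: "y \<in> gen (set b')" "\<mu> < dd" "z = dd*y + \<mu>*a" using NF by blast
    have eq: "dd*y + \<mu>*a + dd = (dd-1)*a" using y(3) zle unfolding z_def by simp
    then have "\<mu>*a \<le> (dd-1)*a" by linarith
    then have mu: "\<mu> \<le> dd-1" using apos by simp
    define t where "t = dd - 1 - \<mu>"
    have "dd - 1 = \<mu> + t" unfolding t_def using mu by simp
    then have "(dd-1)*a = \<mu>*a + t*a" by (simp add: add_mult_distrib)
    then have eq2: "dd*(y+1) = t*a" using eq by simp
    then have "dd dvd t*a" by (metis dvd_triv_left)
    then have "dd dvd t" using cop by (simp add: coprime_dvd_mult_left_iff)
    moreover have "t < dd" unfolding t_def using d2 by simp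
    ultimately have "t = 0" using dvd_imp_le by (metis gr0I leD)
    then show False using eq2 d2 by simp
  qed
  have "z \<le> x" using xmax zn by simp
  then have key: "(dd-1)*(a-1) \<le> x + 1" unfolding z_def using zle
    by (simp add: diff_mult_distrib2)
  have P5: "real (d h) \<le> real_of_int (conductor \<Gamma>) / (real (r ! h) - 1) + 1"
  proof -
    have c: "real_of_int (conductor \<Gamma>) = real x + 1" unfolding conductor_def fro by simp
    have k2: "(real dd - 1) * (real a - 1) \<le> real x + 1"
    proof -
      have "real ((dd-1)*(a-1)) \<le> real (x+1)" using key by (simp only: of_nat_le_iff)
      then show ?thesis using d2 a2 by (simp add: of_nat_diff)
    qed
    have ap: "real a - 1 > 0" using a2 by simp
    have "real dd - 1 \<le> (real x + 1) / (real a - 1)"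
      using k2 ap by (simp add: pos_le_divide_eq)
    then show ?thesis unfolding dh rh c by simp
  qed
  have P6: "(d h - 1) * (r ! h - 1) \<ge> 2 ^ h"
  proof (cases "dd = 2")
    case True
    then have "odd a" using cop by (metis coprime_left_2_iff_odd)
    moreover have "even ((2::nat) ^ h)" using h1 by simp
    ultimately have "a \<noteq> 2 ^ h" by auto
    then have "2 ^ h \<le> a - 1" using a_ge by simp
    then show ?thesis unfolding dh rh using True by simp
  next
    case False
    then have "2 \<le> dd - 1" using d2 by simp
    then have A: "2 * (a-1) \<le> (dd-1)*(a-1)" by (rule mult_le_mono1)
    have B: "2 ^ h \<le> 2 * (a-1)" using a_ge two_h by simp
    show ?thesis unfolding dh rh using A B by linarith
  qed
  have ED: "e k \<ge> 2 \<and> d (Suc k) < d k" if k: "k \<in> {1..h}" for k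
  proof -
    have kl: "k < length r" using k len by simp
    have sub: "set (take k r) \<subseteq> set (take (Suc k) r)" by (rule set_take_subset_set_take) simp
    have dv: "d (Suc k) dvd d k" unfolding d_def using sub by (auto intro: Gcd_greatest Gcd_dvd)
    have tne: "take k r \<noteq> []" using k kl by (cases r) auto
    have "d k \<noteq> 0" unfolding d_def using tne pos
      by (metis Gcd_0_iff in_set_takeD list.set_sel(1) not_less_zero singletonD subset_eq)
    then have dkp: "0 < d k" by simp
    have le: "d (Suc k) \<le> d k" using dv dkp by (simp add: dvd_imp_le)
    have dsp: "0 < d (Suc k)" using dv dkp by (metis dvd_0_left_iff gr0I)
    have neq: "d (Suc k) \<noteq> d k"
    proof
      assume eq: "d (Suc k) = d k"
      then have "e k = 1" unfolding e_def using dkp by simp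
      then have "r ! k \<in> gen (set (take k r))" using P4 k by fastforce
      moreover have "set (take k r) \<subseteq> set r - {r ! k}"
        using nth_notin_take[OF dist kl] by (auto dest: in_set_takeD)
      ultimately have "r ! k \<in> gen (set r - {r ! k})" using gen_mono by blast
      moreover have "r ! k \<in> set r" using kl by simp
      ultimately show False using mgs_not[OF mgs] by blast
    qed
    have "d (Suc k) < d k" using le neq by simp
    moreover have "e k \<ge> 2"
    proof -
      obtain q where q: "d k = d (Suc k) * q" using dv by (auto elim: dvdE)
      have "e k = q" unfolding e_def using q dsp by simp
      moreover have "q \<noteq> 0" using q dkp by auto
      moreover have "q \<noteq> 1" using q neq by auto
      ultimately show ?thesis by simp
    qed
    ultimately show ?thesis by simp
  qed
  show ?thesis using P1 P2 P3 P4 ED P5 P6 dh1 by auto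
qed

end
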